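(* Let $S$ be a finite set, $\Delta$ a nonnegative integer, and $w:S\to\{-\Delta,\dots,\Delta\}$ integer weights with $|w(S)|=\mu$, where $w(S)=\sum_{s\in S}w(s)$. Let $S^+=\{s\in S: w(s)\ge 0\}$. Let $S_1,\dots,S_\ell$ be a partitioning of $S$ into subsets. Then there exists an index $i$ such that \[ |S^+\cap S_i|\ge\frac{|S|-\mu}{\ell\cdot(\Delta+1)}. \] *)

theory Defs
  imports Complex_Main
begin

end

theory Submission
  imports Defs
begin

theorem proposition7:
  fixes S :: "'a set" and \<Delta> :: nat and w :: "'a \<Rightarrow> int" and \<mu> :: int
    and l :: nat and P :: "nat \<Rightarrow> 'a set"
  assumes "finite S"
    and "\<forall>s\<in>S. - int \<Delta> \<le> w s \<and> w s \<le> int \<Delta>"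
    and "\<mu> = \<bar>(\<Sum>s\<in>S. w s)\<bar>"
    and "l \<ge> 1"
    and "(\<Union>i\<in>{1..l}. P i) = S"
    and "\<forall>i\<in>{1..l}. \<forall>j\<in>{1..l}. i \<noteq> j \<longrightarrow> P i \<inter> P j = {}"
  shows "\<exists>i\<in>{1..l}. real (card ({s\<in>S. w s \<ge> 0} \<inter> P i))
           \<ge> (real (card S) - real_of_int \<mu>) / (real l * (real \<Delta> + 1))"
proof -
  define A where "A = {s\<in>S. w s \<ge> 0}"
  define B where "B = {s\<in>S. w s < 0}"
  have fA: "finite A" and fB: "finite B" using assms(1) by (auto simp: A_def B_def)
  have AB: "A \<inter> B = {}" "A \<union> B = S" by (auto simp: A_def B_def)
  have sS: "(\<Sum>s\<in>S. w s) = (\<Sum>s\<in>A. w s) + (\<Sum>s\<in>B. w s)"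
    using sum.union_disjoint[OF fA fB AB(1), of w] AB(2) by simp
  have cS: "card S = card A + card B"
    using card_Un_disjoint[OF fA fB AB(1)] AB(2) by simp
  have sA: "(\<Sum>s\<in>A. w s) \<le> of_nat (card A) * int \<Delta>"
    using sum_bounded_above[of A w "int \<Delta>"] assms(2) by (auto simp: A_def)
  have sB: "(\<Sum>s\<in>B. w s) \<le> of_nat (card B) * (-1)"
    using sum_bounded_above[of B w "-1"] by (auto simp: B_def)
  have key: "int (card S) - \<mu> \<le> (int \<Delta> + 1) * int (card A)"
    using sS cS sA sB assms(3) by (auto simp: algebra_simps)
  have key': "real (card S) - real_of_int \<mu> \<le> (real \<Delta> + 1) * real (card A)"
  proof -
    have "real_of_int (int (card S) - \<mu>) \<le> real_of_int ((int \<Delta> + 1) * int (card A))"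
      using key by linarith
    then show ?thesis by simp
  qed
  have Aeq: "A = (\<Union>i\<in>{1..l}. A \<inter> P i)" using assms(5) by (auto simp: A_def)
  have cA: "card A = (\<Sum>i\<in>{1..l}. card (A \<inter> P i))"
    apply (subst Aeq)
    apply (rule card_UN_disjoint)
    using assms(6) fA by auto
  show ?thesis
  proof (rule ccontr)
    define X where "X = (real (card S) - real_of_int \<mu>) / (real l * (real \<Delta> + 1))"
    assume "\<not> ?thesis"
    then have lt: "\<forall>i\<in>{1..l}. real (card (A \<inter> P i)) < X" by (auto simp: A_def X_def)
    have "real (card A) = (\<Sum>i\<in>{1..l}. real (card (A \<inter> P i)))" using cA by simp
    also have "\<dots> < (\<Sum>i\<in>{1..l}. X)"
      apply (rule sum_strict_mono) using lt assms(4) by auto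
    also have "\<dots> = real l * X" by simp
    finally have c: "real (card A) < real l * X" .
    have pos: "real l * (real \<Delta> + 1) > 0" using assms(4) by simp
    have "(real \<Delta> + 1) * real (card A) < (real \<Delta> + 1) * (real l * X)"
      using c by (simp add: mult_strict_left_mono add_pos_nonneg)
    also have "\<dots> = real (card S) - real_of_int \<mu>" unfolding X_def using pos by (simp add: field_simps)
    finally show False using key' by linarith
  qed
qed

end
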